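(* Suppose $(A,B,K,\tilde\Theta)$ with $\tilde\Theta\in\mathbb{S}_+^{n_x}$ satisfies $$(A+BK)^\top\tilde\Theta(A+BK)-\tilde\Theta+\tilde Q+K^\top\tilde RK\prec0. \quad (\mathrm{D})$$ Consider the LMI in the variables $(\mathbf A,\mathbf B,\mathbf K,\tilde{\mathbf\Theta})$: $$\begin{bmatrix} \mathbf I & \mathbf 0 & \mathbf 0 & -\mathbf B^\top & \mathbf K\\ * & \tilde Q^{-1} & \mathbf 0 & \mathbf 0 & \mathbf I\\ * & * & \tilde R^{-1} & \mathbf 0 & \mathbf K\\ * & * & * & \mathcal{L}^{\mathbf I,\tilde\Theta}_{\mathbf I,\tilde{\mathbf\Theta}}+\mathcal{L}^{B^\top,\mathbf I}_{\mathbf B^\top,\mathbf I} & \mathbf A\\ * & * & * & * & \tilde{\mathbf\Theta}+\mathcal{L}^{K,\mathbf I}_{\mathbf K,\mathbf I} \end{bmatrix}\succ0.$$ Then (a) it is satisfied by $(A,B,K,\tilde\Theta)$; and (b) every solution with $\tilde{\mathbf\Theta}\in\mathbb{S}_+^{n_x}$ satisfies (D) with $(A,B,K,\tilde\Theta)$ replaced by $(\mathbf A,\mathbf B,\mathbf K,\tilde{\mathbf\Theta})$.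
   Context: $A\in\mathbb{R}^{n_x\times n_x}$, $B\in\mathbb{R}^{n_x\times n_u}$, $K\in\mathbb{R}^{n_u\times n_x}$ (bold versions same sizes); $\tilde Q\in\mathbb{S}_+^{n_x}$, $\tilde R\in\mathbb{S}_+^{n_u}$ are fixed. $\mathbb{S}_+^m$ is the set of $m\times m$ symmetric positive definite matrices; $\succ0$ ($\prec0$) means symmetric positive (negative) definite; $*$ denotes symmetric blocks; the first diagonal $\mathbf I$ is $n_u\times n_u$ and the $\mathbf I$ in row 2 is $n_x\times n_x$. For $\mathbf L,L\in\mathbb{R}^{m\times n}$ and symmetric invertible $\mathbf D,D\in\mathbb{R}^{m\times m}$, $\mathcal{L}^{L,D}_{\mathbf L,\mathbf D}:=\mathbf L^\top D^{-1}L+L^\top D^{-1}\mathbf L-L^\top D^{-1}\mathbf DD^{-1}L$. *)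

theory Defs
  imports "HOL-Analysis.Analysis"
begin

definition pos_def :: "real^'n^'n \<Rightarrow> bool" where
  "pos_def M \<longleftrightarrow> transpose M = M \<and> (\<forall>x. x \<noteq> 0 \<longrightarrow> x \<bullet> (M *v x) > 0)"

definition neg_def :: "real^'n^'n \<Rightarrow> bool" where
  "neg_def M \<longleftrightarrow> transpose M = M \<and> (\<forall>x. x \<noteq> 0 \<longrightarrow> x \<bullet> (M *v x) < 0)"

text \<open>The operator L^{L,D}_{Lb,Db} = Lb^T D^-1 L + L^T D^-1 Lb - L^T D^-1 Db D^-1 L.\<close>
definition Lop :: "real^'n^'m \<Rightarrow> real^'m^'m \<Rightarrow> real^'n^'m \<Rightarrow> real^'m^'m \<Rightarrow> real^'n^'n" where
  "Lop Lb Db L D = transpose Lb ** matrix_inv D ** L + transpose L ** matrix_inv D ** Lb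
                   - transpose L ** matrix_inv D ** Db ** matrix_inv D ** L"

definition hcat :: "real^'b^'a \<Rightarrow> real^'c^'a \<Rightarrow> real^('b+'c)^'a" where
  "hcat P Q = (\<chi> i j. case j of Inl b \<Rightarrow> P$i$b | Inr c \<Rightarrow> Q$i$c)"

definition blk2 :: "real^'b^'a \<Rightarrow> real^'d^'a \<Rightarrow> real^'b^'c \<Rightarrow> real^'d^'c \<Rightarrow> real^('b+'d)^('a+'c)" where
  "blk2 P Q R S = (\<chi> i j. case i of
      Inl a \<Rightarrow> (case j of Inl b \<Rightarrow> P$a$b | Inr d \<Rightarrow> Q$a$d)
    | Inr c \<Rightarrow> (case j of Inl b \<Rightarrow> R$c$b | Inr d \<Rightarrow> S$c$d))"

definition sblk2 :: "real^'a^'a \<Rightarrow> real^'c^'a \<Rightarrow> real^'c^'c \<Rightarrow> real^('a+'c)^('a+'c)" where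
  "sblk2 P Q S = blk2 P Q (transpose Q) S"

definition sblk5 ::
  "real^'a^'a \<Rightarrow> real^'b^'a \<Rightarrow> real^'c^'a \<Rightarrow> real^'d^'a \<Rightarrow> real^'e^'a \<Rightarrow>
   real^'b^'b \<Rightarrow> real^'c^'b \<Rightarrow> real^'d^'b \<Rightarrow> real^'e^'b \<Rightarrow>
   real^'c^'c \<Rightarrow> real^'d^'c \<Rightarrow> real^'e^'c \<Rightarrow>
   real^'d^'d \<Rightarrow> real^'e^'d \<Rightarrow> real^'e^'e \<Rightarrow>
   real^('a+('b+('c+('d+'e))))^('a+('b+('c+('d+'e))))" where
  "sblk5 M11 M12 M13 M14 M15 M22 M23 M24 M25 M33 M34 M35 M44 M45 M55 =
     sblk2 M11 (hcat M12 (hcat M13 (hcat M14 M15)))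
      (sblk2 M22 (hcat M23 (hcat M24 M25))
        (sblk2 M33 (hcat M34 M35)
          (sblk2 M44 M45 M55)))"

text \<open>The LMI matrix in the variables (Ab,Bb,Kb,Thb); nominal (B,K,Th), fixed weights Qt, Rt.\<close>
definition lmi :: "real^'n^'n \<Rightarrow> real^'u^'u \<Rightarrow> real^'u^'n \<Rightarrow> real^'n^'u \<Rightarrow> real^'n^'n \<Rightarrow>
    real^'n^'n \<Rightarrow> real^'u^'n \<Rightarrow> real^'n^'u \<Rightarrow> real^'n^'n \<Rightarrow>
    real^('u+('n+('u+('n+'n))))^('u+('n+('u+('n+'n))))" where
  "lmi Qt Rt B K Th Ab Bb Kb Thb =
     sblk5 (mat 1 :: real^'u^'u) (0 :: real^'n^'u) (0 :: real^'u^'u) (- transpose Bb) Kb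
           (matrix_inv Qt) (0 :: real^'u^'n) (0 :: real^'n^'n) (mat 1 :: real^'n^'n)
           (matrix_inv Rt) (0 :: real^'n^'u) Kb
           (Lop (mat 1 :: real^'n^'n) Thb (mat 1) Th + Lop (transpose Bb) (mat 1 :: real^'u^'u) (transpose B) (mat 1))
           Ab
           (Thb + Lop Kb (mat 1 :: real^'u^'u) K (mat 1))"

end

theory Submission imports Defs begin

definition join :: "real^'a \<Rightarrow> real^'b \<Rightarrow> real^('a+'b)" where
  "join x y = (\<chi> i. case i of Inl a \<Rightarrow> x$a | Inr b \<Rightarrow> y$b)"

lemma sum_plus_univ:
  fixes f :: "('a::finite + 'b::finite) \<Rightarrow> real"
  shows "(\<Sum>i\<in>UNIV. f i) = (\<Sum>a\<in>UNIV. f (Inl a)) + (\<Sum>b\<in>UNIV. f (Inr b))"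
proof -
  have U: "(UNIV :: ('a+'b) set) = range Inl \<union> range Inr" by (rule set_eqI, case_tac x, auto)
  have "(\<Sum>i\<in>UNIV. f i) = sum f (range Inl \<union> range Inr)"
    by (subst U, rule refl)
  also have "\<dots> = sum f (range Inl) + sum f (range Inr)"
    by (rule sum.union_disjoint) auto
  also have "\<dots> = (\<Sum>a\<in>UNIV. f (Inl a)) + (\<Sum>b\<in>UNIV. f (Inr b))"
    by (simp add: sum.reindex)
  finally show ?thesis .
qed

lemma inner_join: "join x y \<bullet> join x' y' = x \<bullet> x' + y \<bullet> y'"
  unfolding inner_vec_def join_def by (simp add: sum_plus_univ)

lemma join_split: "z = join (\<chi> a. z$Inl a) (\<chi> b. z$Inr b)"
  unfolding join_def by (simp add: vec_eq_iff split: sum.split)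

lemma join_eq0: "join x y = 0 \<longleftrightarrow> x = 0 \<and> y = 0"
  unfolding join_def by (auto simp: vec_eq_iff split: sum.split)

lemma hcat_mult: "hcat Q1 Q2 *v join y1 y2 = Q1 *v y1 + Q2 *v y2"
  unfolding hcat_def join_def matrix_vector_mult_def by (simp add: vec_eq_iff sum_plus_univ)

lemma sblk2_mult: "sblk2 P Q S *v join x y = join (P *v x + Q *v y) (transpose Q *v x + S *v y)"
  unfolding sblk2_def blk2_def join_def matrix_vector_mult_def
  by (simp add: vec_eq_iff sum_plus_univ split: sum.split)

lemma dot_T: "(transpose (M::real^'n^'m) *v x) \<bullet> y = x \<bullet> (M *v y)"
  apply (simp add: inner_vec_def inner_real_def matrix_vector_mult_def transpose_def sum_distrib_right sum_distrib_left ac_simps)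
  apply (subst sum.swap)
  apply (simp add: ac_simps)
  done

lemma qf_sblk2: "join x y \<bullet> (sblk2 P Q S *v join x y) = x \<bullet> (P *v x) + 2 * (x \<bullet> (Q *v y)) + y \<bullet> (S *v y)"
  using dot_T[of Q x y] by (simp add: sblk2_mult inner_join inner_add_right inner_commute[of y])

lemma transpose_sblk2: "transpose P = P \<Longrightarrow> transpose S = S \<Longrightarrow> transpose (sblk2 P Q S) = sblk2 P Q S"
  unfolding sblk2_def blk2_def transpose_def
  by (auto simp: vec_eq_iff split: sum.split)


lemma transpose_add: "transpose (A + B) = transpose A + transpose (B::real^'n^'m)"
  by (simp add: transpose_def vec_eq_iff)
lemma transpose_diff: "transpose (A - B) = transpose A - transpose (B::real^'n^'m)"
  by (simp add: transpose_def vec_eq_iff)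
lemma transpose_uminus: "transpose (- A) = - transpose (A::real^'n^'m)"
  by (simp add: transpose_def vec_eq_iff)
lemma transpose_zero: "transpose (0::real^'n^'m) = 0"
  by (simp add: transpose_def vec_eq_iff)
lemma uminus_mv: "(- A) *v x = - (A *v (x::real^'n))"
  by (simp add: matrix_vector_mult_def vec_eq_iff sum_negf)

lemma mv_uminus: "A *v (- x) = - (A *v (x::real^'n))"
  by (simp add: matrix_vector_mult_def vec_eq_iff sum_negf)

lemma pd_invertible:
  assumes "pos_def (Q::real^'n^'n)"
  shows "matrix_inv Q ** Q = mat 1 \<and> Q ** matrix_inv Q = mat 1"
proof -
  have "\<forall>x. Q *v x = 0 \<longrightarrow> x = 0"
  proof (intro allI impI)
    fix x assume "Q *v x = 0"
    then show "x = 0" using assms unfolding pos_def_def by (metis inner_zero_right less_irrefl)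
  qed
  then have "invertible Q" using invertible_left_inverse matrix_left_invertible_ker by blast
  then have "\<exists>A'. Q ** A' = mat 1 \<and> A' ** Q = mat 1" unfolding invertible_def by blast
  then have "Q ** matrix_inv Q = mat 1 \<and> matrix_inv Q ** Q = mat 1"
    unfolding matrix_inv_def by (rule someI_ex)
  then show ?thesis by blast
qed

lemma pd_inv_sym:
  assumes "pos_def (Q::real^'n^'n)"
  shows "transpose (matrix_inv Q) = matrix_inv Q"
proof -
  have s: "transpose Q = Q" using assms unfolding pos_def_def by blast
  have "Q ** transpose (matrix_inv Q) = mat 1"
    using pd_invertible[OF assms] s by (metis matrix_transpose_mul transpose_mat)
  then have "matrix_inv Q ** (Q ** transpose (matrix_inv Q)) = matrix_inv Q" by simp
  then show ?thesis using pd_invertible[OF assms] by (simp add: matrix_mul_assoc)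
qed

lemma pd_inv_app:
  assumes "pos_def (Q::real^'n^'n)"
  shows "matrix_inv Q *v (Q *v x) = x" "Q *v (matrix_inv Q *v x) = x"
  using pd_invertible[OF assms] by (simp_all add: matrix_vector_mul_assoc)

lemma pd_inv_nonneg:
  assumes "pos_def (Q::real^'n^'n)"
  shows "x \<bullet> (matrix_inv Q *v x) \<ge> 0" "x \<noteq> 0 \<Longrightarrow> x \<bullet> (matrix_inv Q *v x) > 0"
proof -
  define y where "y = matrix_inv Q *v x"
  have x: "x = Q *v y" using pd_inv_app[OF assms] y_def by simp
  have s: "transpose Q = Q" using assms unfolding pos_def_def by blast
  have e: "x \<bullet> (matrix_inv Q *v x) = y \<bullet> (Q *v y)"
    by (simp add: x pd_inv_app(1)[OF assms] inner_commute)
  have "y \<bullet> (Q *v y) \<ge> 0"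
    using assms unfolding pos_def_def by (cases "y = 0") (auto intro: less_imp_le)
  then show "x \<bullet> (matrix_inv Q *v x) \<ge> 0" using e by simp
  assume "x \<noteq> 0"
  then have "y \<noteq> 0" using x by auto
  then show "x \<bullet> (matrix_inv Q *v x) > 0" using e assms unfolding pos_def_def by simp
qed

lemma pd_nonneg: "pos_def (Q::real^'n^'n) \<Longrightarrow> x \<bullet> (Q *v x) \<ge> 0"
  unfolding pos_def_def by (cases "x = 0") (auto intro: less_imp_le)

lemma inv_mat1: "matrix_inv (mat 1 :: real^'n^'n) = mat 1"
proof -
  have "pos_def (mat 1 :: real^'n^'n)" unfolding pos_def_def by (simp add: inner_gt_zero_iff)
  from pd_invertible[OF this] show ?thesis by simp
qed

lemma Lop_I: "Lop Lb Db L (mat 1) = transpose Lb ** L + transpose L ** Lb - transpose L ** Db ** L"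
  unfolding Lop_def inv_mat1 by simp

lemma dot_TT: "x \<bullet> (transpose (M::real^'n^'m) *v y) = (M *v x) \<bullet> y"
  using dot_T[of "transpose M" x y] by (simp del: transpose_matrix_vector)

lemma qf_Lop_I: "x \<bullet> (Lop Lb Db L (mat 1) *v x) = 2 * ((Lb *v x) \<bullet> (L *v x)) - (L *v x) \<bullet> (Db *v (L *v x))"
proof -
  have 1: "x \<bullet> ((transpose Lb ** L) *v x) = (Lb *v x) \<bullet> (L *v x)"
    by (simp add: matrix_vector_mul_assoc[symmetric] dot_TT del: transpose_matrix_vector)
  have 2: "x \<bullet> ((transpose L ** Lb) *v x) = (Lb *v x) \<bullet> (L *v x)"
    by (simp add: matrix_vector_mul_assoc[symmetric] dot_TT inner_commute del: transpose_matrix_vector)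
  have 3: "x \<bullet> ((transpose L ** Db ** L) *v x) = (L *v x) \<bullet> (Db *v (L *v x))"
    by (simp add: matrix_vector_mul_assoc[symmetric] dot_TT del: transpose_matrix_vector)
  show ?thesis unfolding Lop_I
    by (simp add: matrix_vector_mult_add_rdistrib matrix_vector_mult_diff_rdistrib inner_add_right inner_diff_right 1 2 3
      del: transpose_matrix_vector)
qed

lemma qf_Lop_Th:
  assumes "pos_def (Th::real^'n^'n)"
  shows "x \<bullet> (Lop (mat 1) Db (mat 1) Th *v x) = 2 * (x \<bullet> (matrix_inv Th *v x)) - (matrix_inv Th *v x) \<bullet> (Db *v (matrix_inv Th *v x))"
proof -
  have s: "transpose (matrix_inv Th) = matrix_inv Th" using pd_inv_sym[OF assms] .
  have 3: "x \<bullet> ((matrix_inv Th ** Db ** matrix_inv Th) *v x) = (matrix_inv Th *v x) \<bullet> (Db *v (matrix_inv Th *v x))"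
    using dot_TT[of x "matrix_inv Th" "Db *v (matrix_inv Th *v x)"] s
    by (simp add: matrix_vector_mul_assoc[symmetric] del: transpose_matrix_vector)
  have L: "Lop (mat 1) Db (mat 1) Th = (matrix_inv Th + matrix_inv Th) - matrix_inv Th ** Db ** matrix_inv Th"
    by (simp only: Lop_def transpose_mat matrix_mul_lid matrix_mul_rid)
  show ?thesis unfolding L
    by (simp only: matrix_vector_mult_add_rdistrib matrix_vector_mult_diff_rdistrib inner_add_right inner_diff_right 3 mult_2)
qed

lemma qf_lmi:
  "join a (join b (join c (join d e))) \<bullet> (lmi Qt Rt B K Th Ab Bb Kb Thb *v join a (join b (join c (join d e))))
   = a \<bullet> a - 2 * (a \<bullet> (transpose Bb *v d)) + 2 * (a \<bullet> (Kb *v e))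
     + b \<bullet> (matrix_inv Qt *v b) + 2 * (b \<bullet> e)
     + c \<bullet> (matrix_inv Rt *v c) + 2 * (c \<bullet> (Kb *v e))
     + d \<bullet> (Lop (mat 1) Thb (mat 1) Th *v d) + d \<bullet> (Lop (transpose Bb) (mat 1) (transpose B) (mat 1) *v d)
     + 2 * (d \<bullet> (Ab *v e))
     + e \<bullet> (Thb *v e) + e \<bullet> (Lop Kb (mat 1) K (mat 1) *v e)"
  unfolding lmi_def sblk5_def
  by (simp add: qf_sblk2 hcat_mult uminus_mv inner_add_right inner_diff_right matrix_vector_mult_add_rdistrib
      del: transpose_matrix_vector)


lemma sq_bound: "2 * ((u::real^'n) \<bullet> v) - v \<bullet> v \<le> u \<bullet> u"
proof -
  have "0 \<le> (u - v) \<bullet> (u - v)" by simp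
  then show ?thesis by (simp add: inner_diff_left inner_diff_right inner_commute[of v u])
qed

lemma sym_dot: "transpose (M::real^'n^'n) = M \<Longrightarrow> (M *v x) \<bullet> y = x \<bullet> (M *v y)"
  using dot_T[of M x y] by (simp del: transpose_matrix_vector)

lemma qf_D:
  fixes G T Q :: "real^'n^'n" and K :: "real^'n^'u" and R :: "real^'u^'u"
  shows "e \<bullet> ((transpose G ** T ** G - T + Q + transpose K ** R ** K) *v e)
    = (G *v e) \<bullet> (T *v (G *v e)) - e \<bullet> (T *v e) + e \<bullet> (Q *v e) + (K *v e) \<bullet> (R *v (K *v e))"
proof -
  have 1: "e \<bullet> ((transpose G ** T ** G) *v e) = (G *v e) \<bullet> (T *v (G *v e))"
    using dot_TT[of e G "T *v (G *v e)"] by (simp add: matrix_vector_mul_assoc[symmetric] del: transpose_matrix_vector)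
  have 2: "e \<bullet> ((transpose K ** R ** K) *v e) = (K *v e) \<bullet> (R *v (K *v e))"
    using dot_TT[of e K "R *v (K *v e)"] by (simp add: matrix_vector_mul_assoc[symmetric] del: transpose_matrix_vector)
  show ?thesis
    by (simp only: matrix_vector_mult_add_rdistrib matrix_vector_mult_diff_rdistrib inner_add_right inner_diff_right 1 2)
qed

lemma sym_D:
  assumes "transpose T = T" "transpose Q = Q" "transpose (R::real^'u^'u) = R"
  shows "transpose (transpose G ** T ** (G::real^'n^'n) - T + Q + transpose K ** R ** K) = transpose G ** T ** G - T + Q + transpose K ** R ** K"
  using assms by (simp add: transpose_add transpose_diff matrix_transpose_mul matrix_mul_assoc)

lemma partb:
  fixes B :: "real^'u^'n" and K :: "real^'n^'u" and Th :: "real^'n^'n"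
    and Qt :: "real^'n^'n" and Rt :: "real^'u^'u"
    and Ab :: "real^'n^'n" and Bb :: "real^'u^'n" and Kb :: "real^'n^'u" and Thb :: "real^'n^'n"
  assumes Qt: "pos_def Qt" and Rt: "pos_def Rt" and Th: "pos_def Th" and Thb: "pos_def Thb"
    and M: "pos_def (lmi Qt Rt B K Th Ab Bb Kb Thb)"
  shows "neg_def (transpose (Ab + Bb ** Kb) ** Thb ** (Ab + Bb ** Kb) - Thb + Qt + transpose Kb ** Rt ** Kb)"
proof -
  have sQ: "transpose Qt = Qt" using Qt unfolding pos_def_def by blast
  have sR: "transpose Rt = Rt" using Rt unfolding pos_def_def by blast
  have sT: "transpose Thb = Thb" using Thb unfolding pos_def_def by blast
  have neg: "e \<bullet> ((transpose (Ab + Bb ** Kb) ** Thb ** (Ab + Bb ** Kb) - Thb + Qt + transpose Kb ** Rt ** Kb) *v e) < 0"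
    if e0: "e \<noteq> 0" for e
  proof -
    define w where "w = (Ab + Bb ** Kb) *v e"
    define k where "k = Kb *v e"
    define d where "d = - (Thb *v w)"
    define u where "u = transpose Bb *v d"
    define a where "a = u - k"
    define b where "b = - (Qt *v e)"
    define c where "c = - (Rt *v k)"
    define p where "p = matrix_inv Th *v d"
    define v where "v = transpose B *v d"
    define ke where "ke = K *v e"
    have z0: "join a (join b (join c (join d e))) \<noteq> 0" using e0 by (simp add: join_eq0)
    have F: "join a (join b (join c (join d e))) \<bullet> (lmi Qt Rt B K Th Ab Bb Kb Thb *v join a (join b (join c (join d e)))) > 0"
      using M z0 unfolding pos_def_def by blast
    have L1: "d \<bullet> (Lop (mat 1) Thb (mat 1) Th *v d) = 2 * (d \<bullet> p) - p \<bullet> (Thb *v p)"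
      using qf_Lop_Th[OF Th] p_def by simp
    have L2: "d \<bullet> (Lop (transpose Bb) (mat 1) (transpose B) (mat 1) *v d) = 2 * (u \<bullet> v) - v \<bullet> v"
      unfolding u_def v_def using qf_Lop_I[of d "transpose Bb" "mat 1" "transpose B"] by (simp del: transpose_matrix_vector)
    have L3: "e \<bullet> (Lop Kb (mat 1) K (mat 1) *v e) = 2 * (k \<bullet> ke) - ke \<bullet> ke"
      unfolding k_def ke_def using qf_Lop_I[of e Kb "mat 1" K] by (simp del: transpose_matrix_vector)
    have f1: "2 * (u \<bullet> v) - v \<bullet> v \<le> u \<bullet> u" by (rule sq_bound)
    have f2: "2 * (k \<bullet> ke) - ke \<bullet> ke \<le> k \<bullet> k" by (rule sq_bound)
    have dp: "d \<bullet> p = - (w \<bullet> (Thb *v p))"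
      unfolding d_def using sym_dot[OF sT, of w p] by (simp add: inner_minus_left)
    have "0 \<le> (p + w) \<bullet> (Thb *v (p + w))" by (rule pd_nonneg[OF Thb])
    moreover have "(p + w) \<bullet> (Thb *v (p + w)) = p \<bullet> (Thb *v p) + p \<bullet> (Thb *v w) + w \<bullet> (Thb *v p) + w \<bullet> (Thb *v w)"
      by (simp add: matrix_vector_right_distrib inner_add_left inner_add_right)
    moreover have "p \<bullet> (Thb *v w) = w \<bullet> (Thb *v p)" using sym_dot[OF sT, of w p] by (metis inner_commute)
    ultimately have "0 \<le> p \<bullet> (Thb *v p) + 2 * (w \<bullet> (Thb *v p)) + w \<bullet> (Thb *v w)" by linarith
    then have f3: "2 * (d \<bullet> p) - p \<bullet> (Thb *v p) \<le> w \<bullet> (Thb *v w)" using dp by linarith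
    have f4: "b \<bullet> (matrix_inv Qt *v b) = (Qt *v e) \<bullet> e" "b \<bullet> e = - ((Qt *v e) \<bullet> e)"
      unfolding b_def by (simp_all add: mv_uminus pd_inv_app[OF Qt])
    have f5: "c \<bullet> (matrix_inv Rt *v c) = (Rt *v k) \<bullet> k" "c \<bullet> k = - ((Rt *v k) \<bullet> k)"
      unfolding c_def by (simp_all add: mv_uminus pd_inv_app[OF Rt])
    have f6: "a \<bullet> a - 2 * (a \<bullet> u) + 2 * (a \<bullet> k) = - (u \<bullet> u) + 2 * (u \<bullet> k) - k \<bullet> k"
      unfolding a_def by (simp add: inner_diff_left inner_diff_right inner_commute[of k u] algebra_simps)
    have f7: "u \<bullet> k = d \<bullet> (Bb *v k)" unfolding u_def using dot_T[of Bb d k] by (simp del: transpose_matrix_vector)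
    have f8: "d \<bullet> (Ab *v e) + d \<bullet> (Bb *v k) = - (w \<bullet> (Thb *v w))"
    proof -
      have "w = Ab *v e + Bb *v k" unfolding w_def k_def
        by (simp add: matrix_vector_mult_add_rdistrib matrix_vector_mul_assoc)
      then have "d \<bullet> (Ab *v e) + d \<bullet> (Bb *v k) = d \<bullet> w" by (simp add: inner_add_right)
      also have "\<dots> = - (w \<bullet> (Thb *v w))" unfolding d_def by (simp add: inner_commute)
      finally show ?thesis .
    qed
    have D: "e \<bullet> ((transpose (Ab + Bb ** Kb) ** Thb ** (Ab + Bb ** Kb) - Thb + Qt + transpose Kb ** Rt ** Kb) *v e)
       = w \<bullet> (Thb *v w) - e \<bullet> (Thb *v e) + e \<bullet> (Qt *v e) + k \<bullet> (Rt *v k)"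
      unfolding qf_D w_def k_def ..
    have g1: "(Qt *v e) \<bullet> e = e \<bullet> (Qt *v e)" by (simp add: inner_commute)
    have g2: "(Rt *v k) \<bullet> k = k \<bullet> (Rt *v k)" by (simp add: inner_commute)
    have Fe: "join a (join b (join c (join d e))) \<bullet> (lmi Qt Rt B K Th Ab Bb Kb Thb *v join a (join b (join c (join d e))))
       = a \<bullet> a - 2 * (a \<bullet> u) + 2 * (a \<bullet> k)
     + b \<bullet> (matrix_inv Qt *v b) + 2 * (b \<bullet> e)
     + c \<bullet> (matrix_inv Rt *v c) + 2 * (c \<bullet> k)
     + (2 * (d \<bullet> p) - p \<bullet> (Thb *v p)) + (2 * (u \<bullet> v) - v \<bullet> v)
     + 2 * (d \<bullet> (Ab *v e))
     + e \<bullet> (Thb *v e) + (2 * (k \<bullet> ke) - ke \<bullet> ke)"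
      unfolding qf_lmi L1 L2 L3 u_def[symmetric] k_def[symmetric] ..
    show ?thesis using F Fe f1 f2 f3 f4 f5 f6 f7 f8 D g1 g2 by linarith
  qed
  show ?thesis unfolding neg_def_def using sym_D[OF sT sQ sR] neg by blast
qed


lemma Lop_sym:
  assumes "transpose (matrix_inv D) = matrix_inv D" "transpose Db = Db"
  shows "transpose (Lop L Db L D) = Lop L Db L (D::real^'m^'m)"
proof -
  have 1: "transpose (transpose L ** matrix_inv D ** L) = transpose L ** matrix_inv D ** L"
    using assms by (simp add: matrix_transpose_mul matrix_mul_assoc)
  have 2: "transpose (transpose L ** matrix_inv D ** Db ** matrix_inv D ** L) = transpose L ** matrix_inv D ** Db ** matrix_inv D ** L"
    using assms by (simp add: matrix_transpose_mul matrix_mul_assoc)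
  show ?thesis unfolding Lop_def by (simp only: transpose_add transpose_diff 1 2)
qed

lemma join_ex: "\<exists>a b c d e. z = join a (join b (join c (join d e)))"
  by (metis join_split)

lemma parta:
  fixes A :: "real^'n^'n" and B :: "real^'u^'n" and K :: "real^'n^'u" and Th :: "real^'n^'n"
    and Qt :: "real^'n^'n" and Rt :: "real^'u^'u"
  assumes Qt: "pos_def Qt" and Rt: "pos_def Rt" and Th: "pos_def Th"
    and D: "neg_def (transpose (A + B ** K) ** Th ** (A + B ** K) - Th + Qt + transpose K ** Rt ** K)"
  shows "pos_def (lmi Qt Rt B K Th A B K Th)"
proof -
  have sQ: "transpose Qt = Qt" using Qt unfolding pos_def_def by blast
  have sR: "transpose Rt = Rt" using Rt unfolding pos_def_def by blast
  have sT: "transpose Th = Th" using Th unfolding pos_def_def by blast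
  have sym: "transpose (lmi Qt Rt B K Th A B K Th) = lmi Qt Rt B K Th A B K Th"
    unfolding lmi_def sblk5_def
    by (intro transpose_sblk2)
       (simp_all add: pd_inv_sym[OF Qt] pd_inv_sym[OF Rt] pd_inv_sym[OF Th] inv_mat1 transpose_add sT
         Lop_sym del: transpose_matrix_vector)
  have pos: "z \<bullet> (lmi Qt Rt B K Th A B K Th *v z) > 0" if z0: "z \<noteq> 0" for z
  proof -
    obtain a b c d e where z: "z = join a (join b (join c (join d e)))" using join_ex by blast
    define p where "p = matrix_inv Th *v d"
    define u where "u = transpose B *v d"
    define k where "k = K *v e"
    define g where "g = (A + B ** K) *v e"
    have g': "g = A *v e + B *v k" unfolding g_def k_def
      by (simp add: matrix_vector_mult_add_rdistrib matrix_vector_mul_assoc)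
    have Thp: "Th *v p = d" unfolding p_def using pd_inv_app(2)[OF Th] .
    have L1: "d \<bullet> (Lop (mat 1) Th (mat 1) Th *v d) = 2 * (d \<bullet> p) - p \<bullet> d"
      using qf_Lop_Th[OF Th, of d Th] p_def Thp by simp
    have L2: "d \<bullet> (Lop (transpose B) (mat 1) (transpose B) (mat 1) *v d) = 2 * (u \<bullet> u) - u \<bullet> u"
      unfolding u_def using qf_Lop_I[of d "transpose B" "mat 1" "transpose B"] by (simp del: transpose_matrix_vector)
    have L3: "e \<bullet> (Lop K (mat 1) K (mat 1) *v e) = 2 * (k \<bullet> k) - k \<bullet> k"
      unfolding k_def using qf_Lop_I[of e K "mat 1" K] by (simp del: transpose_matrix_vector)
    have F: "z \<bullet> (lmi Qt Rt B K Th A B K Th *v z)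
       = a \<bullet> a - 2 * (a \<bullet> u) + 2 * (a \<bullet> k)
     + b \<bullet> (matrix_inv Qt *v b) + 2 * (b \<bullet> e)
     + c \<bullet> (matrix_inv Rt *v c) + 2 * (c \<bullet> k)
     + (2 * (d \<bullet> p) - p \<bullet> d) + (2 * (u \<bullet> u) - u \<bullet> u)
     + 2 * (d \<bullet> (A *v e))
     + e \<bullet> (Th *v e) + (2 * (k \<bullet> k) - k \<bullet> k)"
      unfolding z qf_lmi L1 L2 L3 u_def[symmetric] k_def[symmetric] ..
    define s where "s = a - u + k"
    have S1: "s \<bullet> s = a \<bullet> a + u \<bullet> u + k \<bullet> k - 2 * (a \<bullet> u) + 2 * (a \<bullet> k) - 2 * (u \<bullet> k)"
      unfolding s_def by (simp add: inner_add_left inner_add_right inner_diff_left inner_diff_right inner_commute[of u a]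
        inner_commute[of k a] inner_commute[of k u] algebra_simps)
    have uk: "u \<bullet> k = d \<bullet> (B *v k)" unfolding u_def using dot_T[of B d k] by (simp del: transpose_matrix_vector)
    define S2 where "S2 = (b + Qt *v e) \<bullet> (matrix_inv Qt *v (b + Qt *v e))"
    have S2e: "S2 = b \<bullet> (matrix_inv Qt *v b) + 2 * (b \<bullet> e) + e \<bullet> (Qt *v e)"
    proof -
      have "(Qt *v e) \<bullet> (matrix_inv Qt *v b) = e \<bullet> b"
        using dot_T[of "matrix_inv Qt" "Qt *v e" b] pd_inv_sym[OF Qt] pd_inv_app(1)[OF Qt] by (simp del: transpose_matrix_vector)
      then show ?thesis unfolding S2_def
        by (simp add: matrix_vector_right_distrib inner_add_left inner_add_right pd_inv_app(1)[OF Qt] inner_commute[of e b]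
          inner_commute[of "Qt *v e" e])
    qed
    define S3 where "S3 = (c + Rt *v k) \<bullet> (matrix_inv Rt *v (c + Rt *v k))"
    have S3e: "S3 = c \<bullet> (matrix_inv Rt *v c) + 2 * (c \<bullet> k) + k \<bullet> (Rt *v k)"
    proof -
      have "(Rt *v k) \<bullet> (matrix_inv Rt *v c) = k \<bullet> c"
        using dot_T[of "matrix_inv Rt" "Rt *v k" c] pd_inv_sym[OF Rt] pd_inv_app(1)[OF Rt] by (simp del: transpose_matrix_vector)
      then show ?thesis unfolding S3_def
        by (simp add: matrix_vector_right_distrib inner_add_left inner_add_right pd_inv_app(1)[OF Rt] inner_commute[of k c]
          inner_commute[of "Rt *v k" k])
    qed
    define S4 where "S4 = (d + Th *v g) \<bullet> (matrix_inv Th *v (d + Th *v g))"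
    have S4e: "S4 = d \<bullet> p + 2 * (d \<bullet> g) + g \<bullet> (Th *v g)"
    proof -
      have "(Th *v g) \<bullet> p = g \<bullet> d" using sym_dot[OF sT, of g p] Thp by simp
      then show ?thesis unfolding S4_def
        by (simp add: p_def[symmetric] matrix_vector_right_distrib inner_add_left inner_add_right pd_inv_app(1)[OF Th] inner_commute[of g d]
          inner_commute[of "Th *v g" g])
    qed
    have De: "e \<bullet> ((transpose (A + B ** K) ** Th ** (A + B ** K) - Th + Qt + transpose K ** Rt ** K) *v e)
       = g \<bullet> (Th *v g) - e \<bullet> (Th *v e) + e \<bullet> (Qt *v e) + k \<bullet> (Rt *v k)"
      unfolding qf_D g_def k_def ..
    have dg: "d \<bullet> g = d \<bullet> (A *v e) + d \<bullet> (B *v k)" unfolding g' by (simp add: inner_add_right)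
    have pd: "p \<bullet> d = d \<bullet> p" by (simp add: inner_commute)
    have Fsum: "z \<bullet> (lmi Qt Rt B K Th A B K Th *v z) = s \<bullet> s + S2 + S3 + S4
       - e \<bullet> ((transpose (A + B ** K) ** Th ** (A + B ** K) - Th + Qt + transpose K ** Rt ** K) *v e)"
      using F S1 uk S2e S3e S4e De dg pd by linarith
    have n1: "0 \<le> s \<bullet> s" by simp
    have n2: "0 \<le> S2" unfolding S2_def by (rule pd_inv_nonneg(1)[OF Qt])
    have n3: "0 \<le> S3" unfolding S3_def by (rule pd_inv_nonneg(1)[OF Rt])
    have n4: "0 \<le> S4" unfolding S4_def by (rule pd_inv_nonneg(1)[OF Th])
    show ?thesis
    proof (cases "e = 0")
      case False
      then have "e \<bullet> ((transpose (A + B ** K) ** Th ** (A + B ** K) - Th + Qt + transpose K ** Rt ** K) *v e) < 0"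
        using D unfolding neg_def_def by blast
      then show ?thesis using Fsum n1 n2 n3 n4 by linarith
    next
      case True
      then have k0: "k = 0" and g0: "g = 0" unfolding k_def g_def by simp_all
      have S2': "S2 = b \<bullet> (matrix_inv Qt *v b)" unfolding S2_def using True by simp
      have S3': "S3 = c \<bullet> (matrix_inv Rt *v c)" unfolding S3_def using k0 by simp
      have S4': "S4 = d \<bullet> (matrix_inv Th *v d)" unfolding S4_def using g0 by simp
      have De0: "e \<bullet> ((transpose (A + B ** K) ** Th ** (A + B ** K) - Th + Qt + transpose K ** Rt ** K) *v e) = 0"
        using True by simp
      have "0 < s \<bullet> s + S2 + S3 + S4"
      proof -
        have nz: "a \<noteq> 0 \<or> b \<noteq> 0 \<or> c \<noteq> 0 \<or> d \<noteq> 0" using z0 True unfolding z by (auto simp: join_eq0)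
        show ?thesis
        proof (cases "d = 0")
          case False
          then have "0 < S4" unfolding S4' by (rule pd_inv_nonneg(2)[OF Th])
          then show ?thesis using n1 n2 n3 by linarith
        next
          case d0: True
          show ?thesis
          proof (cases "b = 0")
            case False
            then have "0 < S2" unfolding S2' by (rule pd_inv_nonneg(2)[OF Qt])
            then show ?thesis using n1 n3 n4 by linarith
          next
            case b0: True
            show ?thesis
            proof (cases "c = 0")
              case False
              then have "0 < S3" unfolding S3' by (rule pd_inv_nonneg(2)[OF Rt])
              then show ?thesis using n1 n2 n4 by linarith
            next
              case True
              then have "a \<noteq> 0" using nz d0 b0 by blast
              moreover have "s = a" unfolding s_def u_def using d0 k0 by simp
              ultimately have "0 < s \<bullet> s" by simp
              then show ?thesis using n2 n3 n4 by linarith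
            qed
          qed
        qed
      qed
      then show ?thesis using Fsum De0 by linarith
    qed
  qed
  show ?thesis unfolding pos_def_def using sym pos by blast
qed

theorem theorem3:
  fixes A :: "real^'n^'n" and B :: "real^'u^'n" and K :: "real^'n^'u" and Th :: "real^'n^'n"
    and Qt :: "real^'n^'n" and Rt :: "real^'u^'u"
  assumes Qt: "pos_def Qt" and Rt: "pos_def Rt" and Th: "pos_def Th"
    and D: "neg_def (transpose (A + B ** K) ** Th ** (A + B ** K) - Th + Qt + transpose K ** Rt ** K)"
  shows "pos_def (lmi Qt Rt B K Th A B K Th) \<and>
    (\<forall>(Ab :: real^'n^'n) (Bb :: real^'u^'n) (Kb :: real^'n^'u) (Thb :: real^'n^'n).
           pos_def Thb \<and> pos_def (lmi Qt Rt B K Th Ab Bb Kb Thb) \<longrightarrow>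
           neg_def (transpose (Ab + Bb ** Kb) ** Thb ** (Ab + Bb ** Kb) - Thb + Qt + transpose Kb ** Rt ** Kb))"
  using parta[OF Qt Rt Th D] partb[OF Qt Rt Th] by blast

end
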